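(* Let $k\ge 2$ and let $K_{n_1,\ldots,n_k}$ be the complete $k$-partite graph with parts $V_1,\ldots,V_k$ and vertex set $V=V_1\cup\cdots\cup V_k$, where $n_i=|V_i|\ge 2$ for all $1\le i\le k$. Then the diameter of the 1-skeleton of $\mathrm{CUT}(K_{n_1,\ldots,n_k})$ equals $2$.
   Context: For an undirected graph $G=(V,E)$ and $S\subseteq V$, $\delta(S)\subseteq E$ denotes the set of edges with exactly one endpoint in $S$, and $\mathbf v(S)\in\{0,1\}^{E}$ is its incidence vector ($v(S)_e=1$ iff $e\in\delta(S)$). The cut polytope is $\mathrm{CUT}(G)=\operatorname{conv}\{\mathbf v(S):S\subseteq V\}\subset\mathbb R^{E}$. The 1-skeleton of a polytope is the graph whose vertices are the polytope's vertices and whose edges are its one-dimensional faces; the diameter is the maximum shortest-path edge distance between two vertices of this graph. *)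

theory Defs
  imports "HOL-Analysis.Analysis" "HOL-Library.Extended_Nat"
begin

(* Edge coordinates are indexed by
   'v set (an edge {x,y} is a 2-element set); coordinates outside the edge set E
   are always 0, so R^E is embedded isometrically as a coordinate subspace of
   real ^ ('v set). *)

definition cut_vector :: "'v set set \<Rightarrow> 'v set \<Rightarrow> real ^ ('v::finite set)" where
  "cut_vector E S = (\<chi> e. if e \<in> E \<and> card (e \<inter> S) = 1 then 1 else 0)"

definition cut_polytope :: "'v set \<Rightarrow> 'v set set \<Rightarrow> (real ^ ('v::finite set)) set" where
  "cut_polytope V E = convex hull {cut_vector E S | S. S \<subseteq> V}"

definition skel_vertices :: "'a::euclidean_space set \<Rightarrow> 'a set" where
  "skel_vertices P = {x. x extreme_point_of P}"

definition skel_adj :: "'a::euclidean_space set \<Rightarrow> 'a \<Rightarrow> 'a \<Rightarrow> bool" where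
  "skel_adj P u v \<longleftrightarrow> u \<in> skel_vertices P \<and> v \<in> skel_vertices P \<and> u \<noteq> v \<and>
     (\<exists>F. F face_of P \<and> aff_dim F = 1 \<and> u \<in> F \<and> v \<in> F)"

definition skel_walk :: "'a::euclidean_space set \<Rightarrow> 'a \<Rightarrow> 'a \<Rightarrow> nat \<Rightarrow> bool" where
  "skel_walk P u v n \<longleftrightarrow> (\<exists>f. f 0 = u \<and> f n = v \<and> (\<forall>i<n. skel_adj P (f i) (f (Suc i))))"

definition skel_dist :: "'a::euclidean_space set \<Rightarrow> 'a \<Rightarrow> 'a \<Rightarrow> enat" where
  "skel_dist P u v = (if \<exists>n. skel_walk P u v n then enat (LEAST n. skel_walk P u v n) else \<infinity>)"

definition skel_diameter :: "'a::euclidean_space set \<Rightarrow> enat" where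
  "skel_diameter P = Sup {skel_dist P u v | u v. u \<in> skel_vertices P \<and> v \<in> skel_vertices P}"

definition multipartite_edges :: "nat \<Rightarrow> (nat \<Rightarrow> 'v set) \<Rightarrow> 'v set set" where
  "multipartite_edges k V = {{x, y} | x y. \<exists>i<k. \<exists>j<k. i \<noteq> j \<and> x \<in> V i \<and> y \<in> V j}"

end

theory Submission
  imports Defs
begin


definition zo :: "real ^ 'n \<Rightarrow> bool" where "zo x \<longleftrightarrow> (\<forall>i. x$i = 0 \<or> x$i = 1)"

lemma coord_bound:
  fixes u w x :: real
  assumes "u = 0 \<or> u = 1" "w = 0 \<or> w = 1" "x = 0 \<or> x = 1"
  shows "(u + w - 1) * x \<le> u * w" "(u + w - 1) * x = u * w \<longleftrightarrow> (u = w \<longrightarrow> x = u)"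
  using assms by auto

lemma func_bound:
  fixes u w x :: "real ^ 'n"
  assumes "zo u" "zo w" "zo x"
  shows "(\<chi> i. u$i + w$i - 1) \<bullet> x \<le> (\<Sum>i\<in>UNIV. u$i * w$i)"
    and "(\<chi> i. u$i + w$i - 1) \<bullet> x = (\<Sum>i\<in>UNIV. u$i * w$i) \<longleftrightarrow> (\<forall>i. u$i = w$i \<longrightarrow> x$i = u$i)"
proof -
  have c: "\<And>i. (u$i + w$i - 1) * x$i \<le> u$i * w$i"
    "\<And>i. (u$i + w$i - 1) * x$i = u$i * w$i \<longleftrightarrow> (u$i = w$i \<longrightarrow> x$i = u$i)"
    using assms coord_bound unfolding zo_def by blast+
  have ip: "(\<chi> i. u$i + w$i - 1) \<bullet> x = (\<Sum>i\<in>UNIV. (u$i + w$i - 1) * x$i)"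
    by (simp add: inner_vec_def)
  show "(\<chi> i. u$i + w$i - 1) \<bullet> x \<le> (\<Sum>i\<in>UNIV. u$i * w$i)"
    unfolding ip by (rule sum_mono) (use c in auto)
  have "(\<Sum>i\<in>UNIV. (u$i + w$i - 1) * x$i) = (\<Sum>i\<in>UNIV. u$i * w$i) \<longleftrightarrow>
        (\<Sum>i\<in>UNIV. u$i * w$i - (u$i + w$i - 1) * x$i) = 0"
    by (simp only: sum_subtractf) linarith
  also have "\<dots> \<longleftrightarrow> (\<forall>i. u$i * w$i - (u$i + w$i - 1) * x$i = 0)"
    by (subst sum_nonneg_eq_0_iff) (use c in auto)
  also have "\<dots> \<longleftrightarrow> (\<forall>i. u$i = w$i \<longrightarrow> x$i = u$i)"
  proof -
    have "\<And>i. (u$i * w$i - (u$i + w$i - 1) * x$i = 0) = (u$i = w$i \<longrightarrow> x$i = u$i)"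
      using c(2) by (metis right_minus_eq)
    thus ?thesis by simp
  qed
  finally show "(\<chi> i. u$i + w$i - 1) \<bullet> x = (\<Sum>i\<in>UNIV. u$i * w$i) \<longleftrightarrow> (\<forall>i. u$i = w$i \<longrightarrow> x$i = u$i)"
    unfolding ip .
qed

lemma exposed_face:
  fixes A :: "(real ^ 'n) set"
  assumes fin: "finite A" and zoA: "\<And>x. x \<in> A \<Longrightarrow> zo x" and u: "u \<in> A" and w: "w \<in> A"
    and only: "\<And>x. x \<in> A \<Longrightarrow> (\<forall>i. u$i = w$i \<longrightarrow> x$i = u$i) \<Longrightarrow> x = u \<or> x = w"
  obtains F where "F face_of convex hull A" "F = convex hull {u,w}"
proof -
  define c where "c = (\<chi> i. u$i + w$i - 1)"
  define M where "M = (\<Sum>i\<in>UNIV. u$i * w$i)"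
  have le: "c \<bullet> x \<le> M" if "x \<in> convex hull A" for x
  proof -
    have "A \<subseteq> {x. c \<bullet> x \<le> M}"
    proof
      fix y assume "y \<in> A"
      thus "y \<in> {x. c \<bullet> x \<le> M}" unfolding c_def M_def
        using func_bound(1)[OF zoA[OF u] zoA[OF w] zoA[of y]] by simp
    qed
    hence "convex hull A \<subseteq> {x. c \<bullet> x \<le> M}"
      by (rule hull_minimal) (rule convex_halfspace_le)
    thus ?thesis using that by blast
  qed
  define F where "F = convex hull A \<inter> {x. c \<bullet> x = M}"
  have face: "F face_of convex hull A" unfolding F_def
    by (rule face_of_Int_supporting_hyperplane_le[OF convex_convex_hull le])
  obtain S' where S': "S' \<subseteq> A" "F = convex hull S'"
    using face_of_convex_hull_subset[OF finite_imp_compact[OF fin] face] by blast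
  have eqM: "c \<bullet> x = M \<longleftrightarrow> x = u \<or> x = w" if "x \<in> A" for x
  proof -
    have "c \<bullet> x = M \<longleftrightarrow> (\<forall>i. u$i = w$i \<longrightarrow> x$i = u$i)"
      unfolding c_def M_def by (rule func_bound(2)[OF zoA[OF u] zoA[OF w] zoA[OF that]])
    moreover have "(\<forall>i. u$i = w$i \<longrightarrow> u$i = u$i)" "(\<forall>i. u$i = w$i \<longrightarrow> w$i = u$i)" by auto
    ultimately show ?thesis using only[OF that] by blast
  qed
  have "S' \<subseteq> {u,w}"
  proof
    fix x assume "x \<in> S'"
    hence "x \<in> convex hull S'" by (rule hull_inc)
    hence "x \<in> F" using S'(2) by simp
    hence "c \<bullet> x = M" unfolding F_def by blast
    thus "x \<in> {u,w}" using eqM[of x] \<open>x \<in> S'\<close> S'(1) by blast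
  qed
  hence "F \<subseteq> convex hull {u,w}" unfolding S'(2) by (rule hull_mono)
  moreover have "{u,w} \<subseteq> F" unfolding F_def using eqM[OF u] eqM[OF w] u w hull_inc[of u A] hull_inc[of w A] by blast
  hence "convex hull {u,w} \<subseteq> F" using face_of_imp_convex[OF face] by (rule hull_minimal)
  ultimately have "F = convex hull {u,w}" by blast
  thus ?thesis using face that by blast
qed

lemma exposed_vertex:
  fixes A :: "(real ^ 'n) set"
  assumes "finite A" "\<And>x. x \<in> A \<Longrightarrow> zo x" "u \<in> A"
  shows "u extreme_point_of convex hull A"
proof -
  obtain F where "F face_of convex hull A" "F = convex hull {u,u}"
  proof (rule exposed_face[OF assms(1,2,3,3)])
    fix x assume "x \<in> A" "\<forall>i. u $ i = u $ i \<longrightarrow> x $ i = u $ i"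
    hence "x = u" by (simp add: vec_eq_iff)
    thus "x = u \<or> x = u" by simp
  qed blast
  thus ?thesis by (simp add: face_of_singleton)
qed

lemma exposed_edge:
  fixes A :: "(real ^ 'n) set"
  assumes fin: "finite A" and zoA: "\<And>x. x \<in> A \<Longrightarrow> zo x" and u: "u \<in> A" and w: "w \<in> A"
    and ne: "u \<noteq> w"
    and only: "\<And>x. x \<in> A \<Longrightarrow> (\<forall>i. u$i = w$i \<longrightarrow> x$i = u$i) \<Longrightarrow> x = u \<or> x = w"
  shows "\<exists>F. F face_of convex hull A \<and> aff_dim F = 1 \<and> u \<in> F \<and> w \<in> F"
proof -
  obtain F where "F face_of convex hull A" "F = convex hull {u,w}"
    using exposed_face[OF assms(1-4) only] by blast
  moreover have "aff_dim F = 1" using \<open>F = convex hull {u,w}\<close> ne by (simp add: aff_dim_convex_hull)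
  moreover have "u \<in> F" "w \<in> F" using \<open>F = convex hull {u,w}\<close> hull_inc[of u "{u,w}"] hull_inc[of w "{u,w}"] by auto
  ultimately show ?thesis by blast
qed
locale mp =
  fixes k :: nat and V :: "nat \<Rightarrow> ('v::finite) set"
  assumes k2: "k \<ge> 2"
    and disj: "\<And>i j. i < k \<Longrightarrow> j < k \<Longrightarrow> i \<noteq> j \<Longrightarrow> V i \<inter> V j = {}"
    and card2: "\<And>i. i < k \<Longrightarrow> card (V i) \<ge> 2"
begin

abbreviation "Vs \<equiv> (\<Union>i<k. V i)"
abbreviation "E \<equiv> multipartite_edges k V"
abbreviation "cv \<equiv> cut_vector E"
abbreviation "CV \<equiv> {cv S | S. S \<subseteq> Vs}"
abbreviation "P \<equiv> cut_polytope Vs E"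

definition dp :: "'v \<Rightarrow> 'v \<Rightarrow> bool" where
  "dp p q \<longleftrightarrow> (\<exists>i<k. \<exists>j<k. i \<noteq> j \<and> p \<in> V i \<and> q \<in> V j)"

definition conn :: "'v set \<Rightarrow> bool" where
  "conn Z \<longleftrightarrow> (\<forall>p\<in>Z. \<forall>q\<in>Z. p = q \<or> dp p q \<or> (\<exists>z\<in>Z. dp p z \<and> dp q z))"

lemma P_eq: "P = convex hull CV" by (simp add: cut_polytope_def)

lemma dp_sym: "dp p q \<Longrightarrow> dp q p" unfolding dp_def by blast
lemma dp_Vs: "dp p q \<Longrightarrow> p \<in> Vs \<and> q \<in> Vs" unfolding dp_def by blast
lemma dp_same_part: "dp p q \<Longrightarrow> p \<in> V i \<Longrightarrow> q \<in> V i \<Longrightarrow> i < k \<Longrightarrow> False"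
  unfolding dp_def using disj by blast
lemma dp_neq: "dp p q \<Longrightarrow> p \<noteq> q"
  unfolding dp_def using disj by blast

lemma E_cases: "e \<in> E \<Longrightarrow> \<exists>p q. e = {p,q} \<and> dp p q"
  unfolding multipartite_edges_def dp_def by blast

lemma edge_E: "dp p q \<Longrightarrow> {p,q} \<in> E"
  unfolding multipartite_edges_def dp_def by blast

lemma cv_edge: "dp p q \<Longrightarrow> cv A $ {p,q} = (if (p \<in> A) \<noteq> (q \<in> A) then 1 else 0)"
proof -
  assume d: "dp p q"
  hence "p \<noteq> q" by (rule dp_neq)
  hence "card ({p,q} \<inter> A) = 1 \<longleftrightarrow> (p \<in> A) \<noteq> (q \<in> A)"
    by (cases "p \<in> A"; cases "q \<in> A") (auto simp: Int_insert_left)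
  thus ?thesis using edge_E[OF d] by (simp add: cut_vector_def)
qed

lemma cv_notE: "e \<notin> E \<Longrightarrow> cv A $ e = 0"
  by (simp add: cut_vector_def)

lemma cv_eq_iff: "cv A = cv B \<longleftrightarrow> (\<forall>p q. dp p q \<longrightarrow> ((p \<in> A) \<noteq> (q \<in> A)) = ((p \<in> B) \<noteq> (q \<in> B)))"
proof
  assume "cv A = cv B"
  thus "\<forall>p q. dp p q \<longrightarrow> ((p \<in> A) \<noteq> (q \<in> A)) = ((p \<in> B) \<noteq> (q \<in> B))"
    by (metis cv_edge zero_neq_one)
next
  assume H: "\<forall>p q. dp p q \<longrightarrow> ((p \<in> A) \<noteq> (q \<in> A)) = ((p \<in> B) \<noteq> (q \<in> B))"
  show "cv A = cv B"
  unfolding vec_eq_iff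
  proof (intro allI)
    fix e
    show "cv A $ e = cv B $ e"
    proof (cases "e \<in> E")
      case True
      then obtain p q where "e = {p,q}" "dp p q" using E_cases by blast
      thus ?thesis using H cv_edge by metis
    qed (simp add: cv_notE)
  qed
qed

lemma zo_cv: "zo (cv A)" unfolding zo_def cut_vector_def by simp

lemma CV_fin: "finite CV"
proof -
  have "CV = cv ` Pow Vs" by auto
  thus ?thesis by simp
qed

lemma CV_zo: "x \<in> CV \<Longrightarrow> zo x" using zo_cv by auto

lemma conn_two:
  assumes "Z \<subseteq> Vs" "x \<in> Z" "y \<in> Z" "dp x y"
  shows "conn Z"
  unfolding conn_def
proof (intro ballI)
  fix p q assume p: "p \<in> Z" and q: "q \<in> Z"
  obtain i where i: "i < k" "p \<in> V i" using p assms(1) by blast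
  obtain j where j: "j < k" "q \<in> V j" using q assms(1) by blast
  obtain i0 i1 where x: "i0 < k" "x \<in> V i0" and y: "i1 < k" "y \<in> V i1" and "i0 \<noteq> i1"
    using assms(4) unfolding dp_def by blast
  show "p = q \<or> dp p q \<or> (\<exists>z\<in>Z. dp p z \<and> dp q z)"
  proof (cases "i = j")
    case False thus ?thesis using i j unfolding dp_def by blast
  next
    case True
    show ?thesis
    proof (cases "i = i0")
      case False
      hence "dp p x \<and> dp q x" using i j x True unfolding dp_def by blast
      thus ?thesis using assms(2) by blast
    next
      case True
      hence "i \<noteq> i1" using \<open>i0 \<noteq> i1\<close> by simp
      hence "dp p y \<and> dp q y" using i j y \<open>i = j\<close> unfolding dp_def by blast
      thus ?thesis using assms(3) by blast
    qed
  qed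
qed

lemma conn_sing: "Z \<subseteq> {x} \<Longrightarrow> conn Z" unfolding conn_def by blast

lemma conn_prop:
  assumes "conn Z" "\<And>p q. p \<in> Z \<Longrightarrow> q \<in> Z \<Longrightarrow> dp p q \<Longrightarrow> f p = f q" "p \<in> Z" "q \<in> Z"
  shows "f p = f q"
  using assms unfolding conn_def by metis

lemma adj_cut:
  assumes S: "S \<subseteq> Vs" and W: "W \<subseteq> Vs"
    and c1: "conn {z\<in>Vs. (z \<in> S) \<noteq> (z \<in> W)}" and c2: "conn {z\<in>Vs. (z \<in> S) = (z \<in> W)}"
    and p0: "dp p0 q0" "((p0 \<in> S) = (p0 \<in> W)) \<noteq> ((q0 \<in> S) = (q0 \<in> W))"
  shows "skel_adj P (cv S) (cv W)"
proof -
  have uA: "cv S \<in> CV" and wA: "cv W \<in> CV" using S W by auto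
  have ne: "cv S \<noteq> cv W" using p0 cv_eq_iff by blast
  have only: "x = cv S \<or> x = cv W"
    if x: "x \<in> CV" and H: "\<forall>i. cv S $ i = cv W $ i \<longrightarrow> x $ i = cv S $ i" for x
  proof -
    obtain X where X: "x = cv X" "X \<subseteq> Vs" using x by blast
    define g where "g z = ((z \<in> S) = (z \<in> W))" for z
    define f where "f z = ((z \<in> X) = (z \<in> S))" for z
    have ed: "f p = f q" if "dp p q" "g p = g q" for p q
    proof -
      have "cv S $ {p,q} = cv W $ {p,q}" using that cv_edge[OF that(1)] unfolding g_def by auto
      hence "cv X $ {p,q} = cv S $ {p,q}" using H X by auto
      thus ?thesis using cv_edge[OF that(1)] unfolding f_def by (auto split: if_splits)
    qed
    have all: "f p = f q" if "p \<in> Vs" "q \<in> Vs" "g p = g q" for p q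
    proof (cases "g p")
      case True
      show ?thesis
        by (rule conn_prop[OF c2, of f]) (use that True ed in \<open>auto simp: g_def\<close>)
    next
      case False
      show ?thesis
        by (rule conn_prop[OF c1, of f]) (use that False ed in \<open>auto simp: g_def\<close>)
    qed
    show ?thesis
    proof (cases "\<forall>p q. dp p q \<longrightarrow> f p = f q")
      case True
      hence "cv X = cv S" unfolding cv_eq_iff f_def by blast
      thus ?thesis using X by simp
    next
      case False
      then obtain p1 q1 where pq: "dp p1 q1" "f p1 \<noteq> f q1" by blast
      have gd: "g p1 \<noteq> g q1" using all pq dp_Vs by blast
      have cst: "(f z = g z) = (f p1 = g p1)" if "z \<in> Vs" for z
      proof (cases "g z = g p1")
        case True thus ?thesis using all[of z p1] that dp_Vs[OF pq(1)] by auto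
      next
        case False
        hence "g z = g q1" using gd by blast
        hence "f z = f q1" using all[of z q1] that dp_Vs[OF pq(1)] by auto
        thus ?thesis using False gd pq(2) \<open>g z = g q1\<close> by blast
      qed
      have "cv X = cv W" unfolding cv_eq_iff
      proof (intro allI impI)
        fix p q assume d: "dp p q"
        have "(f p = g p) = (f q = g q)" using cst dp_Vs[OF d] by blast
        thus "((p \<in> X) \<noteq> (q \<in> X)) = ((p \<in> W) \<noteq> (q \<in> W))" unfolding f_def g_def by blast
      qed
      thus ?thesis using X by simp
    qed
  qed
  have "\<exists>F. F face_of convex hull CV \<and> aff_dim F = 1 \<and> cv S \<in> F \<and> cv W \<in> F"
  proof (rule exposed_edge[OF CV_fin CV_zo uA wA ne])
    fix x assume a: "x \<in> CV" "\<forall>i. cv S $ i = cv W $ i \<longrightarrow> x $ i = cv S $ i"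
    show "x = cv S \<or> x = cv W" by (rule only[OF a])
  qed
  moreover have "cv S \<in> skel_vertices P" "cv W \<in> skel_vertices P"
    unfolding skel_vertices_def P_eq using exposed_vertex[OF CV_fin CV_zo] uA wA by auto
  ultimately show ?thesis unfolding skel_adj_def P_eq using ne by blast
qed

end
lemma two_elems: "2 \<le> card A \<Longrightarrow> \<exists>a b. a \<in> A \<and> b \<in> A \<and> a \<noteq> b"
proof -
  assume c: "2 \<le> card A"
  hence fin: "finite A" by (metis card.infinite not_numeral_le_zero)
  show ?thesis
  proof (rule ccontr)
    assume "\<not> ?thesis"
    hence "\<forall>a\<in>A. \<forall>b\<in>A. a = b" by blast
    hence "card A \<le> Suc 0" using card_le_Suc0_iff_eq[OF fin] by blast
    thus False using c by simp
  qed
qed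

context mp begin

lemma walk_dist: "skel_walk Q u v n \<Longrightarrow> skel_dist Q u v \<le> enat n"
  unfolding skel_dist_def by (auto intro: Least_le)

lemma walk1: "skel_adj Q u v \<Longrightarrow> skel_walk Q u v 1"
  unfolding skel_walk_def by (rule exI[of _ "\<lambda>i. if i = 0 then u else v"]) auto

lemma walk2: "skel_adj Q u w \<Longrightarrow> skel_adj Q w v \<Longrightarrow> skel_walk Q u v 2"
  unfolding skel_walk_def
  apply (rule exI[of _ "\<lambda>i. if i = 0 then u else if i = 1 then w else v"])
  apply (auto simp: less_2_cases_iff)
  done

lemma dist_ge2:
  assumes "u \<noteq> v" "\<not> skel_adj Q u v"
  shows "skel_dist Q u v \<ge> 2"
proof -
  have n2: "n \<ge> 2" if "skel_walk Q u v n" for n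
  proof (rule ccontr)
    assume "\<not> n \<ge> 2"
    hence "n = 0 \<or> n = 1" by auto
    thus False using that assms unfolding skel_walk_def by auto
  qed
  show ?thesis
  proof (cases "\<exists>n. skel_walk Q u v n")
    case True
    hence "skel_walk Q u v (LEAST n. skel_walk Q u v n)" by (rule LeastI_ex)
    hence L: "(LEAST n. skel_walk Q u v n) \<ge> 2" by (rule n2)
    show ?thesis unfolding skel_dist_def if_P[OF True] using L by (simp add: numeral_eq_enat)
  next
    case False show ?thesis unfolding skel_dist_def if_not_P[OF False] by simp
  qed
qed

lemma four_points:
  obtains a0 b0 a1 b1 where "a0 \<in> V 0" "b0 \<in> V 0" "a0 \<noteq> b0" "a1 \<in> V 1" "b1 \<in> V 1" "a1 \<noteq> b1"
    "0 < k" "1 < k"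
proof -
  have "0 < k" "1 < k" using k2 by auto
  have "card (V 0) \<ge> 2" "card (V 1) \<ge> 2" using card2 \<open>0 < k\<close> \<open>1 < k\<close> by auto
  then obtain a0 b0 a1 b1 where "a0 \<in> V 0" "b0 \<in> V 0" "a0 \<noteq> b0" "a1 \<in> V 1" "b1 \<in> V 1" "a1 \<noteq> b1"
    using two_elems by metis
  thus ?thesis using that \<open>0 < k\<close> \<open>1 < k\<close> by blast
qed

lemma adj_bal:
  assumes pts: "a0 \<in> V 0" "b0 \<in> V 0" "a1 \<in> V 1" "b1 \<in> V 1" "0 < k" "1 < k"
    and S: "S \<subseteq> Vs" and W: "W \<subseteq> Vs"
    and b0: "((a0 \<in> S) \<noteq> (a0 \<in> W)) \<noteq> ((b0 \<in> S) \<noteq> (b0 \<in> W))"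
    and b1: "((a1 \<in> S) \<noteq> (a1 \<in> W)) \<noteq> ((b1 \<in> S) \<noteq> (b1 \<in> W))"
  shows "skel_adj P (cv S) (cv W)"
proof -
  obtain x0 y0 where x0: "x0 \<in> V 0" "(x0 \<in> S) \<noteq> (x0 \<in> W)" and y0: "y0 \<in> V 0" "(y0 \<in> S) = (y0 \<in> W)"
    using b0 pts by metis
  obtain x1 y1 where x1: "x1 \<in> V 1" "(x1 \<in> S) \<noteq> (x1 \<in> W)" and y1: "y1 \<in> V 1" "(y1 \<in> S) = (y1 \<in> W)"
    using b1 pts by metis
  have dp: "dp p q" if "p \<in> V 0" "q \<in> V 1" for p q
    unfolding dp_def using that pts by (intro exI[of _ 0] conjI exI[of _ 1]) auto
  have Vs0: "V 0 \<subseteq> Vs" "V 1 \<subseteq> Vs" using UN_upper[of 0 "{..<k}" V] UN_upper[of 1 "{..<k}" V] pts by auto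
  show ?thesis
  proof (rule adj_cut[OF S W])
    show "conn {z \<in> Vs. (z \<in> S) \<noteq> (z \<in> W)}"
      by (rule conn_two[of _ x0 x1]) (use x0 x1 dp Vs0 in auto)
    show "conn {z \<in> Vs. (z \<in> S) = (z \<in> W)}"
      by (rule conn_two[of _ y0 y1]) (use y0 y1 dp Vs0 in auto)
    show "dp x0 y1" using dp x0 y1 by blast
    show "((x0 \<in> S) = (x0 \<in> W)) \<noteq> ((y1 \<in> S) = (y1 \<in> W))" using x0 y1 by blast
  qed
qed

lemma adj_single:
  assumes pts: "a \<in> V i" "b \<in> V i" "a \<noteq> b" "c \<in> V j" "i < k" "j < k" "i \<noteq> j"
    and S: "S \<subseteq> Vs" and W: "W \<subseteq> Vs"
    and d: "\<And>z. z \<in> Vs \<Longrightarrow> ((z \<in> S) \<noteq> (z \<in> W)) \<longleftrightarrow> z = a"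
  shows "skel_adj P (cv S) (cv W)"
proof -
  have dp: "dp p q" if "p \<in> V i" "q \<in> V j" for p q
    unfolding dp_def using that pts by blast
  have Vs0: "V i \<subseteq> Vs" "V j \<subseteq> Vs" using pts by auto
  have "c \<noteq> a" using pts disj by blast
  show ?thesis
  proof (rule adj_cut[OF S W])
    show "conn {z \<in> Vs. (z \<in> S) \<noteq> (z \<in> W)}"
      by (rule conn_sing[of _ a]) (use d in auto)
    show "conn {z \<in> Vs. (z \<in> S) = (z \<in> W)}"
      by (rule conn_two[of _ b c]) (use d dp Vs0 pts \<open>c \<noteq> a\<close> in auto)
    show "dp a c" using dp pts by blast
    show "((a \<in> S) = (a \<in> W)) \<noteq> ((c \<in> S) = (c \<in> W))" using d[of a] d[of c] Vs0 pts \<open>c \<noteq> a\<close> by blast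
  qed
qed

lemma vert_CV: "x \<in> skel_vertices P \<Longrightarrow> x \<in> CV"
  unfolding skel_vertices_def P_eq using extreme_point_of_convex_hull by blast

lemma upper:
  assumes pts: "a0 \<in> V 0" "b0 \<in> V 0" "a0 \<noteq> b0" "a1 \<in> V 1" "b1 \<in> V 1" "a1 \<noteq> b1" "0 < k" "1 < k"
    and S: "S \<subseteq> Vs" and T: "T \<subseteq> Vs"
  shows "skel_dist P (cv S) (cv T) \<le> 2"
proof -
  have dd: "a0 \<noteq> a1" "a0 \<noteq> b1" "b0 \<noteq> a1" "b0 \<noteq> b1" using pts disj[of 0 1] by auto
  have in0: "a0 \<in> Vs" "b0 \<in> Vs" "a1 \<in> Vs" "b1 \<in> Vs" using pts by auto
  define d where "d z = ((z \<in> S) \<noteq> (z \<in> T))" for z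
  consider (bb) "d a0 \<noteq> d b0" "d a1 \<noteq> d b1" | (uu) "d a0 = d b0" "d a1 = d b1"
    | (ub) "d a0 = d b0" "d a1 \<noteq> d b1" | (bu) "d a0 \<noteq> d b0" "d a1 = d b1" by blast
  thus ?thesis
  proof cases
    case bb
    have "skel_adj P (cv S) (cv T)"
      by (rule adj_bal[OF pts(1,2,4,5,7,8) S T]) (use bb in \<open>auto simp: d_def\<close>)
    hence "skel_walk P (cv S) (cv T) 1" by (rule walk1)
    hence "skel_dist P (cv S) (cv T) \<le> enat 1" by (rule walk_dist)
    also have "enat 1 \<le> enat 2" by simp
    also have "enat 2 = 2" by (simp add: numeral_eq_enat)
    finally show ?thesis .
  next
    case uu
    define W where "W = S - {a0,a1} \<union> ({a0,a1} - S)"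
    have W: "W \<subseteq> Vs" using S in0 unfolding W_def by auto
    have "skel_adj P (cv S) (cv W)"
      by (rule adj_bal[OF pts(1,2,4,5,7,8) S W]) (use dd pts in \<open>auto simp: W_def\<close>)
    moreover have "skel_adj P (cv W) (cv T)"
      by (rule adj_bal[OF pts(1,2,4,5,7,8) W T]) (use dd pts uu in \<open>auto simp: W_def d_def\<close>)
    ultimately have "skel_walk P (cv S) (cv T) 2" by (rule walk2)
    hence "skel_dist P (cv S) (cv T) \<le> enat 2" by (rule walk_dist)
    thus ?thesis by (simp add: numeral_eq_enat)
  next
    case ub
    define W where "W = S - {a0} \<union> ({a0} - S)"
    have W: "W \<subseteq> Vs" using S in0 unfolding W_def by auto
    have "skel_adj P (cv S) (cv W)"
      by (rule adj_single[OF pts(1,2,3,4) _ _ _ S W]) (use pts dd in \<open>auto simp: W_def\<close>)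
    moreover have "skel_adj P (cv W) (cv T)"
      by (rule adj_bal[OF pts(1,2,4,5,7,8) W T]) (use dd pts ub in \<open>auto simp: W_def d_def\<close>)
    ultimately have "skel_walk P (cv S) (cv T) 2" by (rule walk2)
    hence "skel_dist P (cv S) (cv T) \<le> enat 2" by (rule walk_dist)
    thus ?thesis by (simp add: numeral_eq_enat)
  next
    case bu
    define W where "W = S - {a1} \<union> ({a1} - S)"
    have W: "W \<subseteq> Vs" using S in0 unfolding W_def by auto
    have "skel_adj P (cv S) (cv W)"
      by (rule adj_single[OF pts(4,5,6,1) _ _ _ S W]) (use pts dd in \<open>auto simp: W_def\<close>)
    moreover have "skel_adj P (cv W) (cv T)"
      by (rule adj_bal[OF pts(1,2,4,5,7,8) W T]) (use dd pts bu in \<open>auto simp: W_def d_def\<close>)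
    ultimately have "skel_walk P (cv S) (cv T) 2" by (rule walk2)
    hence "skel_dist P (cv S) (cv T) \<le> enat 2" by (rule walk_dist)
    thus ?thesis by (simp add: numeral_eq_enat)
  qed
qed

end
lemma ext_not_between:
  fixes a b c :: "'a::euclidean_space"
  assumes "c extreme_point_of S" "a \<in> S" "b \<in> S" "between (a,b) c" "c \<noteq> a" "c \<noteq> b"
  shows False
proof -
  have "c \<in> closed_segment a b" using assms(4) by (simp add: between_mem_segment)
  hence "c \<in> open_segment a b" using assms(5,6) by (simp add: open_segment_def)
  thus False using assms(1-3) unfolding extreme_point_of_def by blast
qed

context mp begin

lemma lower:
  assumes pts: "a0 \<in> V 0" "b0 \<in> V 0" "a0 \<noteq> b0" "a1 \<in> V 1" "b1 \<in> V 1" "a1 \<noteq> b1" "0 < k" "1 < k"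
  shows "cv {} \<in> skel_vertices P" "cv {a0,b0} \<in> skel_vertices P"
    "skel_dist P (cv {}) (cv {a0,b0}) \<ge> 2"
proof -
  define u where "u = cv {}"
  define v where "v = cv {a0,b0}"
  define w where "w = cv {a0}"
  define z where "z = cv {b0}"
  have in0: "a0 \<in> Vs" "b0 \<in> Vs" using pts by auto
  have CVs: "u \<in> CV" "v \<in> CV" "w \<in> CV" "z \<in> CV" unfolding u_def v_def w_def z_def using in0 by auto
  have ext: "x extreme_point_of P" if "x \<in> CV" for x
    unfolding P_eq by (rule exposed_vertex[OF CV_fin CV_zo that])
  have inP: "x \<in> P" if "x \<in> CV" for x
    unfolding P_eq using that by (rule hull_inc)
  show "cv {} \<in> skel_vertices P" "cv {a0,b0} \<in> skel_vertices P"
    using ext CVs unfolding skel_vertices_def u_def v_def by auto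
  have dp1: "dp a0 a1" "dp b0 a1" unfolding dp_def using pts by (intro exI[of _ 0] conjI exI[of _ 1]; simp)+
  have nn: "a1 \<noteq> a0" "a1 \<noteq> b0" using dp1 dp_neq by blast+
  have e1: "u $ {a0,a1} = 0" "v $ {a0,a1} = 1" "w $ {a0,a1} = 1" "z $ {a0,a1} = 0"
    unfolding u_def v_def w_def z_def using cv_edge[OF dp1(1)] nn pts(3) by auto
  have e2: "v $ {b0,a1} = 1" "w $ {b0,a1} = 0"
    unfolding v_def w_def using cv_edge[OF dp1(2)] nn pts(3) by auto
  have uv: "u \<noteq> v" and wu: "w \<noteq> u" and wv: "w \<noteq> v" and wz: "w \<noteq> z"
    using e1 e2 by force+
  have sum: "u + v = w + z"
    unfolding vec_eq_iff
  proof
    fix e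
    show "(u + v) $ e = (w + z) $ e"
    proof (cases "e \<in> E")
      case True
      then obtain p q where pq: "e = {p,q}" "dp p q" using E_cases by blast
      have "\<not> (p \<in> {a0,b0} \<and> q \<in> {a0,b0})" using dp_same_part[OF pq(2), of 0] pts by auto
      thus ?thesis unfolding u_def v_def w_def z_def pq(1) using cv_edge[OF pq(2)] pts(3) by auto
    next
      case False thus ?thesis unfolding u_def v_def w_def z_def by (simp add: cv_notE)
    qed
  qed
  have nadj: "\<not> skel_adj P u v"
  proof
    assume "skel_adj P u v"
    then obtain F where F: "F face_of P" "aff_dim F = 1" "u \<in> F" "v \<in> F"
      unfolding skel_adj_def by blast
    have "closed_segment u v \<subseteq> F" using face_of_imp_convex[OF F(1)] F(3,4)
      by (simp add: convex_contains_segment)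
    hence m: "midpoint u v \<in> F" using midpoint_in_closed_segment by blast
    have "midpoint u v = midpoint w z" unfolding midpoint_def using sum by simp
    hence "midpoint u v \<in> open_segment w z" using wz by simp
    hence "w \<in> F" using face_ofD[OF F(1) _ inP[OF CVs(3)] inP[OF CVs(4)] m] by blast
    hence "aff_dim {u,v,w} \<le> aff_dim F" using F by (intro aff_dim_subset) auto
    hence "collinear {u,v,w}" using F(2) by (simp add: collinear_aff_dim)
    hence "between (v,w) u \<or> between (w,u) v \<or> between (u,v) w" by (simp add: collinear_between_cases)
    thus False
      using ext_not_between[OF ext[OF CVs(1)] inP[OF CVs(2)] inP[OF CVs(3)]]
        ext_not_between[OF ext[OF CVs(2)] inP[OF CVs(3)] inP[OF CVs(1)]]
        ext_not_between[OF ext[OF CVs(3)] inP[OF CVs(1)] inP[OF CVs(2)]]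
        uv wu wv by metis
  qed
  show "skel_dist P (cv {}) (cv {a0,b0}) \<ge> 2"
    using dist_ge2[OF uv nadj] unfolding u_def v_def .
qed

lemma main: "skel_diameter P = 2"
proof -
  obtain a0 b0 a1 b1 where pts: "a0 \<in> V 0" "b0 \<in> V 0" "a0 \<noteq> b0" "a1 \<in> V 1" "b1 \<in> V 1" "a1 \<noteq> b1" "0 < k" "1 < k"
    by (rule four_points)
  define D where "D = {skel_dist P u v | u v. u \<in> skel_vertices P \<and> v \<in> skel_vertices P}"
  have le: "x \<le> 2" if xD: "x \<in> D" for x
  proof -
    obtain u v where uv: "x = skel_dist P u v" "u \<in> skel_vertices P" "v \<in> skel_vertices P"
      using xD unfolding D_def by blast
    obtain S T where "u = cv S" "S \<subseteq> Vs" "v = cv T" "T \<subseteq> Vs" using vert_CV uv by blast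
    thus ?thesis using upper[OF pts] uv by simp
  qed
  have mem: "skel_dist P (cv {}) (cv {a0,b0}) \<in> D" unfolding D_def using lower[OF pts] by blast
  have "Sup D \<le> 2" by (rule Sup_least) (rule le)
  moreover have "2 \<le> Sup D" using lower(3)[OF pts] Sup_upper[OF mem] by (rule order_trans)
  ultimately show ?thesis unfolding skel_diameter_def D_def[symmetric] by (rule antisym)
qed

end

theorem theorem11:
  fixes k :: nat and V :: "nat \<Rightarrow> ('v::finite) set"
  assumes "k \<ge> 2"
    and "\<And>i j. i < k \<Longrightarrow> j < k \<Longrightarrow> i \<noteq> j \<Longrightarrow> V i \<inter> V j = {}"
    and "\<And>i. i < k \<Longrightarrow> card (V i) \<ge> 2"
  shows "skel_diameter (cut_polytope (\<Union>i<k. V i) (multipartite_edges k V)) = 2"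
proof -
  interpret mp k V using assms by (rule mp.intro)
  show ?thesis by (rule main)
qed

end
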